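(* (Refinement Validity.) Consider an execution of the Aegean protocol described in the context, under the stated failure model, network model and Reasoning Refinement assumption. If the protocol outputs a solution $s$, then $s$ satisfies refinement validity: $Q(t,s)\ge Q(t,s^* )$ for some majority optimal solution $s^*$.
   Context: Setting. A single task description $t$ (a string) is given to all agents. A Quality Oracle is a deterministic function $Q:\Sigma^*\times\Sigma^*\to\mathbb{R}$ that maps a task description and a solution string to a real number, the quality of the solution for the task; it is unknown to the agents. There are $N$ agents $A_0,\dots,A_{N-1}$. Each agent is a state machine with an internal context $c$ and a reasoning function $\mathcal{R}:(c,\text{string})\mapsto(c',\text{string})$; the input string is either the task description or a string combining a list of solutions with their reasoning traces, and the output string contains a solution together with a reasoning trace (context input/output is left implicit, writing $r\gets\mathcal{R}(x)$). Majority optimal solution: supposing each agent individually generates a solution to $t$, a majority optimal solution is a solution of maximal $Q$-quality among the individual solutions generated by some simple majority of the agents. Reasoning Refinement assumption: for any set $S$ of solutions (with reasoning traces) and any agent, if the agent applies its reasoning function to a string $\bar s$ combining all solutions in $S$, then $Q(t,\mathcal{R}(\bar s))\ge Q(t,s)$ for every $s\in S$. Failure/network model: agents fail only by stopping (fail-stop; a failed agent stops responding but never deviates from the protocol); at most $\lceil (N-1)/2\rceil$ agents fail; a quorum is any set of a majority of the agents, so any two quorums intersect. Agents are fully connected and the network is partially synchronous: after some finite but unknown time, every message is delivered within a bounded delay. The Aegean protocol. Execution proceeds in terms, numbered increasingly; each agent keeps a term number, a role (leader, candidate or worker), an id, a round number, and a stored refinement set refmset. Leader election: an agent entering a new term broadcasts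 RequestVote(term) and becomes candidate; an agent receiving a RequestVote with a higher term adopts that term, becomes worker and replies Vote; each agent casts at most one vote per term (a candidate votes for itself); a candidate receiving votes from a quorum of distinct agents for its term becomes leader; on lack of progress agents time out, advance the term and retry. Hence there is at most one leader per term. First term: the leader broadcasts Task(term, $t$); each agent computes $s\gets\mathcal{R}(t)$ and sends Solution(term, id, $s$) to the leader; the leader collects Solution messages from a quorum of distinct agents (including itself), lets $\bar R$ be the set of these solutions, sets round to $1$ and broadcasts RefmSet(term, round, $\bar R$). Refinement rounds: an agent receiving a RefmSet with round number no less than its own stores $\bar R$ as its refmset, updates its round number, computes $r\gets\mathcal{R}(\bar R)$ and sends Refm(term, id, round, $r$) to the leader; the leader collects Refm messages with matching round from a quorum of distinct agents, lets $\bar R$ be the set of these refined solutions (the refinement set of that round), inputs (term, round, $\bar R$) to the refinement decision engine, increments its round number and broadcasts RefmSet(term, round, $\bar R$); this repeats until a solution is output. Leader change: a newly elected leader broadcasts NewTerm(term); an agent receiving NewTerm with a term greater than its own replies NewTermAck(new term, its current term, id, its round, its refmset) and adopts the new term; upon NewTermAcks with matching new term from a quorum, the new leader selects the ack with the highest (old) term, breaking ties by highest round, sets its round to $1$ and broadcasts RefmSet(term, 1, $\bar R$) with $\bar R$ taken from the selected ack; then normal refinement rounds proceed. Refinement decision engine: only the leader outputs solutions; in a term, a solution output "in round $i$" must belong to the refinement set of round $i$, may only be output once the leader has collected the refinement set of round $i+1$, and at most one solution is output per round. Users may impose additional output criteria (e.g. requiring at least $\alpha$ semantically equivalent solutions in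 a refinement set, or that a solution appear in $\beta$ consecutive rounds' refinement sets). *)

theory Defs
  imports Complex_Main
begin

text \<open>Agents are 0, ..., N-1. Strings (task descriptions, solutions with reasoning traces)
  have abstract type 's; agent reasoning contexts have abstract type 'c.
  The reasoning function of agent i is R i :: 'c => 's => 'c * 's;
  combine S is the string combining all solutions of a set S.
  The network is modelled as the set of all messages ever sent; any agent may
  process any sent message addressed to it at any time (asynchrony, reordering,
  duplication). This over-approximates partially synchronous executions.\<close>

datatype role = Leader | Candidate | Worker

datatype lphase = LNone | LTask | LAck | LRefine

datatype 's msg =
    RequestVote nat nat                         \<comment> \<open>term, candidate\<close>
  | Vote nat nat nat                            \<comment> \<open>term, voter, candidate\<close>
  | Task nat 's nat                             \<comment> \<open>term, task, leader\<close>
  | Solution nat nat 's nat                     \<comment> \<open>term, id, solution, leader\<close>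
  | RefmSet nat nat "'s set" nat                \<comment> \<open>term, round, set, leader\<close>
  | Refm nat nat nat 's nat                     \<comment> \<open>term, id, round, refined solution, leader\<close>
  | NewTerm nat nat                             \<comment> \<open>term, leader\<close>
  | NewTermAck nat nat nat nat "'s set option" nat
      \<comment> \<open>new term, old term, id, round, refmset, leader\<close>

record ('s, 'c) gstate =
  aterm   :: "nat \<Rightarrow> nat"
  arole   :: "nat \<Rightarrow> role"
  around  :: "nat \<Rightarrow> nat"
  arefm   :: "nat \<Rightarrow> 's set option"        \<comment> \<open>stored refmset (None: none stored yet)\<close>
  arterm  :: "nat \<Rightarrow> nat"                 \<comment> \<open>term in which the refmset was stored\<close>
  actx    :: "nat \<Rightarrow> 'c"
  avoted  :: "nat \<Rightarrow> nat \<Rightarrow> nat option"     \<comment> \<open>vote cast by agent in a term\<close>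
  lph     :: "nat \<Rightarrow> lphase"               \<comment> \<open>phase of an agent acting as leader\<close>
  lround  :: "nat \<Rightarrow> nat"                 \<comment> \<open>round counter of an agent acting as leader\<close>
  alive   :: "nat \<Rightarrow> bool"
  msgs    :: "'s msg set"
  rsets   :: "nat \<Rightarrow> nat \<Rightarrow> 's set option"  \<comment> \<open>refinement set of (term, round) collected by the leader\<close>
  outd    :: "nat \<Rightarrow> nat \<Rightarrow> bool"         \<comment> \<open>a solution was output in (term, round)\<close>
  outputs :: "'s set"

definition quorum :: "nat \<Rightarrow> nat set \<Rightarrow> bool" where
  "quorum N A \<longleftrightarrow> A \<subseteq> {..<N} \<and> N < 2 * card A"

definition maxfail :: "nat \<Rightarrow> nat" where
  "maxfail N = nat \<lceil>(real N - 1) / 2\<rceil>"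

definition init_state :: "(nat \<Rightarrow> 'c) \<Rightarrow> ('s, 'c) gstate" where
  "init_state ctx0 = \<lparr> aterm = (\<lambda>_. 0), arole = (\<lambda>_. Worker), around = (\<lambda>_. 0),
     arefm = (\<lambda>_. None), arterm = (\<lambda>_. 0), actx = ctx0, avoted = (\<lambda>_ _. None),
     lph = (\<lambda>_. LNone), lround = (\<lambda>_. 0), alive = (\<lambda>_. True), msgs = {},
     rsets = (\<lambda>_ _. None), outd = (\<lambda>_ _. False), outputs = {} \<rparr>"

inductive step ::
  "nat \<Rightarrow> 's \<Rightarrow> (nat \<Rightarrow> 'c \<Rightarrow> 's \<Rightarrow> 'c \<times> 's) \<Rightarrow> ('s set \<Rightarrow> 's)
   \<Rightarrow> (nat \<Rightarrow> (nat \<Rightarrow> 's set option) \<Rightarrow> nat \<Rightarrow> 's \<Rightarrow> bool)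
   \<Rightarrow> ('s, 'c) gstate \<Rightarrow> ('s, 'c) gstate \<Rightarrow> bool"
  for N t R combine crit
where
  crash: "\<lbrakk> i < N; alive \<sigma> i; card {j. j < N \<and> \<not> alive \<sigma> j} < maxfail N \<rbrakk>
    \<Longrightarrow> step N t R combine crit \<sigma> (\<sigma>\<lparr>alive := (alive \<sigma>)(i := False)\<rparr>)"
| timeout: "\<lbrakk> i < N; alive \<sigma> i; T = Suc (aterm \<sigma> i); avoted \<sigma> i T = None \<rbrakk>
    \<Longrightarrow> step N t R combine crit \<sigma> (\<sigma>\<lparr>aterm := (aterm \<sigma>)(i := T),
          arole := (arole \<sigma>)(i := Candidate),
          avoted := (avoted \<sigma>)(i := (avoted \<sigma> i)(T := Some i)),
          lph := (lph \<sigma>)(i := LNone),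
          msgs := msgs \<sigma> \<union> {RequestVote T i, Vote T i i}\<rparr>)"
| vote: "\<lbrakk> i < N; alive \<sigma> i; RequestVote T j \<in> msgs \<sigma>; aterm \<sigma> i < T; avoted \<sigma> i T = None \<rbrakk>
    \<Longrightarrow> step N t R combine crit \<sigma> (\<sigma>\<lparr>aterm := (aterm \<sigma>)(i := T),
          arole := (arole \<sigma>)(i := Worker),
          avoted := (avoted \<sigma>)(i := (avoted \<sigma> i)(T := Some j)),
          lph := (lph \<sigma>)(i := LNone),
          msgs := msgs \<sigma> \<union> {Vote T i j}\<rparr>)"
| elect: "\<lbrakk> i < N; alive \<sigma> i; arole \<sigma> i = Candidate; quorum N A;
            \<forall>j\<in>A. Vote (aterm \<sigma> i) j i \<in> msgs \<sigma> \<rbrakk>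
    \<Longrightarrow> step N t R combine crit \<sigma> (\<sigma>\<lparr>arole := (arole \<sigma>)(i := Leader),
          lph := (lph \<sigma>)(i := (if aterm \<sigma> i = 1 then LTask else LAck)),
          msgs := msgs \<sigma> \<union> {if aterm \<sigma> i = 1 then Task (aterm \<sigma> i) t i
                               else NewTerm (aterm \<sigma> i) i}\<rparr>)"
| task: "\<lbrakk> i < N; alive \<sigma> i; Task T t' j \<in> msgs \<sigma>; aterm \<sigma> i = T;
           R i (actx \<sigma> i) t' = (c', s) \<rbrakk>
    \<Longrightarrow> step N t R combine crit \<sigma> (\<sigma>\<lparr>actx := (actx \<sigma>)(i := c'),
          msgs := msgs \<sigma> \<union> {Solution T i s j}\<rparr>)"
| collect_sol: "\<lbrakk> i < N; alive \<sigma> i; arole \<sigma> i = Leader; lph \<sigma> i = LTask; quorum N A; i \<in> A;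
                  \<forall>j\<in>A. Solution (aterm \<sigma> i) j (g j) i \<in> msgs \<sigma> \<rbrakk>
    \<Longrightarrow> step N t R combine crit \<sigma> (\<sigma>\<lparr>lround := (lround \<sigma>)(i := 1),
          lph := (lph \<sigma>)(i := LRefine),
          msgs := msgs \<sigma> \<union> {RefmSet (aterm \<sigma> i) 1 (g ` A) i}\<rparr>)"
| refine: "\<lbrakk> i < N; alive \<sigma> i; RefmSet T r Rb j \<in> msgs \<sigma>; aterm \<sigma> i = T;
             arterm \<sigma> i < T \<or> around \<sigma> i \<le> r;
             R i (actx \<sigma> i) (combine Rb) = (c', r') \<rbrakk>
    \<Longrightarrow> step N t R combine crit \<sigma> (\<sigma>\<lparr>arefm := (arefm \<sigma>)(i := Some Rb),
          arterm := (arterm \<sigma>)(i := T),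
          around := (around \<sigma>)(i := r),
          actx := (actx \<sigma>)(i := c'),
          msgs := msgs \<sigma> \<union> {Refm T i r r' j}\<rparr>)"
| collect_refm: "\<lbrakk> i < N; alive \<sigma> i; arole \<sigma> i = Leader; lph \<sigma> i = LRefine; quorum N A;
                   \<forall>j\<in>A. Refm (aterm \<sigma> i) j (lround \<sigma> i) (g j) i \<in> msgs \<sigma> \<rbrakk>
    \<Longrightarrow> step N t R combine crit \<sigma> (\<sigma>\<lparr>
          rsets := (rsets \<sigma>)(aterm \<sigma> i := (rsets \<sigma> (aterm \<sigma> i))(lround \<sigma> i := Some (g ` A))),
          lround := (lround \<sigma>)(i := Suc (lround \<sigma> i)),
          msgs := msgs \<sigma> \<union> {RefmSet (aterm \<sigma> i) (Suc (lround \<sigma> i)) (g ` A) i}\<rparr>)"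
  \<comment> \<open>refinement decision engine: output a solution of round k once round k+1 is collected,
      at most one per round, subject to the user criterion crit\<close>
| output_sol: "\<lbrakk> i < N; alive \<sigma> i; arole \<sigma> i = Leader; aterm \<sigma> i = T;
             rsets \<sigma> T k = Some Rk; rsets \<sigma> T (Suc k) \<noteq> None; s \<in> Rk;
             \<not> outd \<sigma> T k; crit T (rsets \<sigma> T) k s \<rbrakk>
    \<Longrightarrow> step N t R combine crit \<sigma> (\<sigma>\<lparr>outputs := insert s (outputs \<sigma>),
          outd := (outd \<sigma>)(T := (outd \<sigma> T)(k := True))\<rparr>)"
| ack: "\<lbrakk> i < N; alive \<sigma> i; NewTerm T j \<in> msgs \<sigma>; aterm \<sigma> i \<le> T \<rbrakk>
    \<Longrightarrow> step N t R combine crit \<sigma> (\<sigma>\<lparr>aterm := (aterm \<sigma>)(i := T),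
          arole := (arole \<sigma>)(i := (if i = j then arole \<sigma> i else Worker)),
          lph := (lph \<sigma>)(i := (if i = j then lph \<sigma> i else LNone)),
          msgs := msgs \<sigma> \<union> {NewTermAck T (arterm \<sigma> i) i (around \<sigma> i) (arefm \<sigma> i) j}\<rparr>)"
| collect_ack: "\<lbrakk> i < N; alive \<sigma> i; arole \<sigma> i = Leader; lph \<sigma> i = LAck; quorum N A;
                  \<forall>j\<in>A. NewTermAck (aterm \<sigma> i) (ot j) j (rd j) (rs j) i \<in> msgs \<sigma>;
                  k \<in> A; \<forall>j\<in>A. ot j < ot k \<or> (ot j = ot k \<and> rd j \<le> rd k);
                  rs k = Some Rb \<rbrakk>
    \<Longrightarrow> step N t R combine crit \<sigma> (\<sigma>\<lparr>lround := (lround \<sigma>)(i := 1),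
          lph := (lph \<sigma>)(i := LRefine),
          msgs := msgs \<sigma> \<union> {RefmSet (aterm \<sigma> i) 1 Rb i}\<rparr>)"
| collect_ack_none: "\<lbrakk> i < N; alive \<sigma> i; arole \<sigma> i = Leader; lph \<sigma> i = LAck; quorum N A;
                  \<forall>j\<in>A. NewTermAck (aterm \<sigma> i) (ot j) j (rd j) (rs j) i \<in> msgs \<sigma>;
                  k \<in> A; \<forall>j\<in>A. ot j < ot k \<or> (ot j = ot k \<and> rd j \<le> rd k);
                  rs k = None \<rbrakk>
    \<Longrightarrow> step N t R combine crit \<sigma> (\<sigma>\<lparr>lph := (lph \<sigma>)(i := LTask),
          msgs := msgs \<sigma> \<union> {Task (aterm \<sigma> i) t i}\<rparr>)"

definition reachable ::
  "nat \<Rightarrow> 's \<Rightarrow> (nat \<Rightarrow> 'c \<Rightarrow> 's \<Rightarrow> 'c \<times> 's) \<Rightarrow> ('s set \<Rightarrow> 's)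
   \<Rightarrow> (nat \<Rightarrow> (nat \<Rightarrow> 's set option) \<Rightarrow> nat \<Rightarrow> 's \<Rightarrow> bool) \<Rightarrow> (nat \<Rightarrow> 'c)
   \<Rightarrow> ('s, 'c) gstate \<Rightarrow> bool" where
  "reachable N t R combine crit ctx0 \<sigma> \<longleftrightarrow> (step N t R combine crit)\<^sup>*\<^sup>* (init_state ctx0) \<sigma>"

definition individual :: "('s, 'c) gstate \<Rightarrow> nat \<Rightarrow> 's \<Rightarrow> bool" where
  "individual \<sigma> i s \<longleftrightarrow> (\<exists>T j. Solution T i s j \<in> msgs \<sigma>)"

definition majority_optimal ::
  "nat \<Rightarrow> 's \<Rightarrow> ('s \<Rightarrow> 's \<Rightarrow> real) \<Rightarrow> ('s, 'c) gstate \<Rightarrow> 's \<Rightarrow> bool" where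
  "majority_optimal N t Q \<sigma> s' \<longleftrightarrow>
     (\<exists>M g. quorum N M \<and> (\<forall>i\<in>M. individual \<sigma> i (g i)) \<and> s' \<in> g ` M \<and>
            (\<forall>i\<in>M. Q t (g i) \<le> Q t s'))"

end

theory Submission
  imports Defs
begin

definition gv :: "nat \<Rightarrow> 's \<Rightarrow> ('s \<Rightarrow> 's \<Rightarrow> real) \<Rightarrow> ('s, 'c) gstate \<Rightarrow> 's \<Rightarrow> bool" where
  "gv N t Q \<sigma> x \<longleftrightarrow> (\<exists>s'. majority_optimal N t Q \<sigma> s' \<and> Q t s' \<le> Q t x)"

definition good :: "nat \<Rightarrow> 's \<Rightarrow> ('s \<Rightarrow> 's \<Rightarrow> real) \<Rightarrow> ('s, 'c) gstate \<Rightarrow> 's set \<Rightarrow> bool" where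
  "good N t Q \<sigma> S \<longleftrightarrow> finite S \<and> (\<exists>x\<in>S. gv N t Q \<sigma> x)"

definition inv :: "nat \<Rightarrow> 's \<Rightarrow> ('s \<Rightarrow> 's \<Rightarrow> real) \<Rightarrow> ('s, 'c) gstate \<Rightarrow> bool" where
  "inv N t Q \<sigma> \<longleftrightarrow>
     (\<forall>T r Rb j. RefmSet T r Rb j \<in> msgs \<sigma> \<longrightarrow> good N t Q \<sigma> Rb) \<and>
     (\<forall>T i r r' j. Refm T i r r' j \<in> msgs \<sigma> \<longrightarrow> gv N t Q \<sigma> r') \<and>
     (\<forall>i Rb. arefm \<sigma> i = Some Rb \<longrightarrow> good N t Q \<sigma> Rb) \<and>
     (\<forall>T ot i rd Rb j. NewTermAck T ot i rd (Some Rb) j \<in> msgs \<sigma> \<longrightarrow> good N t Q \<sigma> Rb) \<and>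
     (\<forall>T k Rk. rsets \<sigma> T k = Some Rk \<longrightarrow> (\<forall>x\<in>Rk. gv N t Q \<sigma> x)) \<and>
     (\<forall>x\<in>outputs \<sigma>. gv N t Q \<sigma> x)"

lemma mo_mono:
  assumes "msgs \<sigma> \<subseteq> msgs \<sigma>'" "majority_optimal N t Q \<sigma> s"
  shows "majority_optimal N t Q \<sigma>' s"
  using assms unfolding majority_optimal_def individual_def by fast

lemma gv_mono:
  assumes "msgs \<sigma> \<subseteq> msgs \<sigma>'" "gv N t Q \<sigma> x"
  shows "gv N t Q \<sigma>' x"
  using assms mo_mono[OF assms(1)] unfolding gv_def by fast

lemma good_mono:
  assumes "msgs \<sigma> \<subseteq> msgs \<sigma>'" "good N t Q \<sigma> S"
  shows "good N t Q \<sigma>' S"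
  using assms gv_mono[OF assms(1)] unfolding good_def by fast

lemma step_msgs: "step N t R combine crit \<sigma> \<sigma>' \<Longrightarrow> msgs \<sigma> \<subseteq> msgs \<sigma>'"
  by (induction rule: step.induct) auto

lemma quorum_fin: "quorum N A \<Longrightarrow> finite A \<and> A \<noteq> {}"
  unfolding quorum_def using finite_subset by fastforce

lemma sol_good:
  assumes q: "quorum N A" and sol: "\<forall>j\<in>A. Solution T j (g j) l \<in> msgs \<sigma>"
  shows "good N t Q \<sigma> (g ` A)"
proof -
  have fA: "finite A" "A \<noteq> {}" using quorum_fin[OF q] by auto
  define f where "f = (\<lambda>j. Q t (g j))"
  have "Max (f ` A) \<in> f ` A" using fA by (simp add: Max_in)
  then obtain m where m1: "m \<in> A" and m2: "f m = Max (f ` A)" by (auto simp del: Max_in)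
  have m3: "\<forall>j\<in>A. Q t (g j) \<le> Q t (g m)"
  proof
    fix j assume "j \<in> A"
    then have "f j \<le> Max (f ` A)" using fA(1) by (simp del: Max_in)
    then show "Q t (g j) \<le> Q t (g m)" using m2 unfolding f_def by simp
  qed
  have "majority_optimal N t Q \<sigma> (g m)"
    unfolding majority_optimal_def individual_def
    apply (rule exI[of _ A], rule exI[of _ g])
    using q sol m1 m3 by auto
  then have "gv N t Q \<sigma> (g m)" unfolding gv_def by auto
  then show ?thesis unfolding good_def using fA m1 by auto
qed

lemma inv_full:
  assumes m: "msgs \<sigma> \<subseteq> msgs \<sigma>'"
    and n1: "\<And>T r Rb j. RefmSet T r Rb j \<in> msgs \<sigma>' \<Longrightarrow> good N t Q \<sigma> Rb"
    and n2: "\<And>T i r r' j. Refm T i r r' j \<in> msgs \<sigma>' \<Longrightarrow> gv N t Q \<sigma> r'"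
    and n3: "\<And>i Rb. arefm \<sigma>' i = Some Rb \<Longrightarrow> good N t Q \<sigma> Rb"
    and n4: "\<And>T ot i rd Rb j. NewTermAck T ot i rd (Some Rb) j \<in> msgs \<sigma>' \<Longrightarrow> good N t Q \<sigma> Rb"
    and n5: "\<And>T k Rk x. rsets \<sigma>' T k = Some Rk \<Longrightarrow> x \<in> Rk \<Longrightarrow> gv N t Q \<sigma> x"
    and n6: "\<And>x. x \<in> outputs \<sigma>' \<Longrightarrow> gv N t Q \<sigma> x"
  shows "inv N t Q \<sigma>'"
  unfolding inv_def
  apply (intro conjI allI impI ballI)
  apply (rule good_mono[OF m], erule n1)
  apply (rule gv_mono[OF m], erule n2)
  apply (rule good_mono[OF m], erule n3)
  apply (rule good_mono[OF m], erule n4)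
  apply (rule gv_mono[OF m], erule (1) n5)
  apply (rule gv_mono[OF m], erule n6)
  done

lemma inv_parts:
  assumes "inv N t Q \<sigma>"
  shows "\<And>T r Rb j. RefmSet T r Rb j \<in> msgs \<sigma> \<Longrightarrow> good N t Q \<sigma> Rb"
    and "\<And>T i r r' j. Refm T i r r' j \<in> msgs \<sigma> \<Longrightarrow> gv N t Q \<sigma> r'"
    and "\<And>i Rb. arefm \<sigma> i = Some Rb \<Longrightarrow> good N t Q \<sigma> Rb"
    and "\<And>T ot i rd Rb j. NewTermAck T ot i rd (Some Rb) j \<in> msgs \<sigma> \<Longrightarrow> good N t Q \<sigma> Rb"
    and "\<And>T k Rk x. rsets \<sigma> T k = Some Rk \<Longrightarrow> x \<in> Rk \<Longrightarrow> gv N t Q \<sigma> x"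
    and "\<And>x. x \<in> outputs \<sigma> \<Longrightarrow> gv N t Q \<sigma> x"
proof -
  note A = assms[unfolded inv_def]
  show "\<And>T r Rb j. RefmSet T r Rb j \<in> msgs \<sigma> \<Longrightarrow> good N t Q \<sigma> Rb"
    by (rule A[THEN conjunct1, rule_format])
  show "\<And>T i r r' j. Refm T i r r' j \<in> msgs \<sigma> \<Longrightarrow> gv N t Q \<sigma> r'"
    by (rule A[THEN conjunct2, THEN conjunct1, rule_format])
  show "\<And>i Rb. arefm \<sigma> i = Some Rb \<Longrightarrow> good N t Q \<sigma> Rb"
    by (rule A[THEN conjunct2, THEN conjunct2, THEN conjunct1, rule_format])
  show "\<And>T ot i rd Rb j. NewTermAck T ot i rd (Some Rb) j \<in> msgs \<sigma> \<Longrightarrow> good N t Q \<sigma> Rb"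
    by (rule A[THEN conjunct2, THEN conjunct2, THEN conjunct2, THEN conjunct1, rule_format])
  show "\<And>T k Rk x. rsets \<sigma> T k = Some Rk \<Longrightarrow> x \<in> Rk \<Longrightarrow> gv N t Q \<sigma> x"
    by (rule A[THEN conjunct2, THEN conjunct2, THEN conjunct2, THEN conjunct2, THEN conjunct1, rule_format])
  show "\<And>x. x \<in> outputs \<sigma> \<Longrightarrow> gv N t Q \<sigma> x"
    by (rule A[THEN conjunct2, THEN conjunct2, THEN conjunct2, THEN conjunct2, THEN conjunct2, rule_format])
qed

lemma inv_init: "inv N t Q (init_state ctx0)"
  unfolding inv_def init_state_def by simp

lemma inv_step:
  assumes refinement:
      "\<And>i c S s0. i < N \<Longrightarrow> finite S \<Longrightarrow> s0 \<in> S \<Longrightarrow> Q t s0 \<le> Q t (snd (R i c (combine S)))"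
    and st: "step N t R combine crit \<sigma> \<sigma>'" and iv: "inv N t Q \<sigma>"
  shows "inv N t Q \<sigma>'"
  using st iv
proof (induction rule: step.induct)
  case (crash i \<sigma>)
  note P = inv_parts[OF crash.prems]
  show ?case
    apply (rule inv_full[where \<sigma>=\<sigma>])
    apply (simp_all add: subset_insertI2 split: if_splits)
    apply ((elim disjE conjE)?; (hypsubst+)?; ((rule P(1); (assumption | (rule sym, assumption))) | (rule P(2); (assumption | (rule sym, assumption))) | (rule P(3); (assumption | (rule sym, assumption))) | (rule P(4); (assumption | (rule sym, assumption))) | (rule P(5); (assumption | (rule sym, assumption))) | (rule P(6); (assumption | (rule sym, assumption)))))+
    done
next
  case (timeout i \<sigma> T)
  note P = inv_parts[OF timeout.prems]
  show ?case
    apply (rule inv_full[where \<sigma>=\<sigma>])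
    apply (simp_all add: subset_insertI2 split: if_splits)
    apply ((elim disjE conjE)?; (hypsubst+)?; ((rule P(1); (assumption | (rule sym, assumption))) | (rule P(2); (assumption | (rule sym, assumption))) | (rule P(3); (assumption | (rule sym, assumption))) | (rule P(4); (assumption | (rule sym, assumption))) | (rule P(5); (assumption | (rule sym, assumption))) | (rule P(6); (assumption | (rule sym, assumption)))))+
    done
next
  case (vote i \<sigma> T j)
  note P = inv_parts[OF vote.prems]
  show ?case
    apply (rule inv_full[where \<sigma>=\<sigma>])
    apply (simp_all add: subset_insertI2 split: if_splits)
    apply ((elim disjE conjE)?; (hypsubst+)?; ((rule P(1); (assumption | (rule sym, assumption))) | (rule P(2); (assumption | (rule sym, assumption))) | (rule P(3); (assumption | (rule sym, assumption))) | (rule P(4); (assumption | (rule sym, assumption))) | (rule P(5); (assumption | (rule sym, assumption))) | (rule P(6); (assumption | (rule sym, assumption)))))+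
    done
next
  case (elect i \<sigma> A)
  note P = inv_parts[OF elect.prems]
  show ?case
    apply (rule inv_full[where \<sigma>=\<sigma>])
    apply (simp_all add: subset_insertI2 split: if_splits)
    apply ((elim disjE conjE)?; (hypsubst+)?; ((rule P(1); (assumption | (rule sym, assumption))) | (rule P(2); (assumption | (rule sym, assumption))) | (rule P(3); (assumption | (rule sym, assumption))) | (rule P(4); (assumption | (rule sym, assumption))) | (rule P(5); (assumption | (rule sym, assumption))) | (rule P(6); (assumption | (rule sym, assumption)))))+
    done
next
  case (task i \<sigma> T t' j c' s)
  note P = inv_parts[OF task.prems]
  show ?case
    apply (rule inv_full[where \<sigma>=\<sigma>])
    apply (simp_all add: subset_insertI2 split: if_splits)
    apply ((elim disjE conjE)?; (hypsubst+)?; ((rule P(1); (assumption | (rule sym, assumption))) | (rule P(2); (assumption | (rule sym, assumption))) | (rule P(3); (assumption | (rule sym, assumption))) | (rule P(4); (assumption | (rule sym, assumption))) | (rule P(5); (assumption | (rule sym, assumption))) | (rule P(6); (assumption | (rule sym, assumption)))))+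
    done
next
  case (collect_sol i \<sigma> A g)
  note P = inv_parts[OF collect_sol.prems]
  have g: "good N t Q \<sigma> (g ` A)" using sol_good[of N A "aterm \<sigma> i" g i \<sigma>] collect_sol by fast
  show ?case
    apply (rule inv_full[where \<sigma>=\<sigma>])
    apply (simp_all add: subset_insertI2 split: if_splits)
    apply ((elim disjE conjE)?; (hypsubst+)?; ((rule P(1); (assumption | (rule sym, assumption))) | (rule P(2); (assumption | (rule sym, assumption))) | (rule P(3); (assumption | (rule sym, assumption))) | (rule P(4); (assumption | (rule sym, assumption))) | (rule P(5); (assumption | (rule sym, assumption))) | (rule P(6); (assumption | (rule sym, assumption))) | (rule g)))+
    done
next
  case (refine i \<sigma> T r Rb j c' r')
  note P = inv_parts[OF refine.prems]
  have g: "good N t Q \<sigma> Rb" using P(1) refine.hyps(3) by fast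
  then obtain x where x: "finite Rb" "x \<in> Rb" "gv N t Q \<sigma> x" unfolding good_def by fast
  have "Q t x \<le> Q t r'" using refinement[OF refine.hyps(1) x(1,2), of "actx \<sigma> i"] refine.hyps(6)
    by simp
  then have r: "gv N t Q \<sigma> r'" using x(3) unfolding gv_def by force
  show ?case
    apply (rule inv_full[where \<sigma>=\<sigma>])
    apply (simp_all add: subset_insertI2 split: if_splits)
    apply ((elim disjE conjE)?; (hypsubst+)?; ((rule P(1); (assumption | (rule sym, assumption))) | (rule P(2); (assumption | (rule sym, assumption))) | (rule P(3); (assumption | (rule sym, assumption))) | (rule P(4); (assumption | (rule sym, assumption))) | (rule P(5); (assumption | (rule sym, assumption))) | (rule P(6); (assumption | (rule sym, assumption))) | (rule g) | (rule r)))+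
    done
next
  case (collect_refm i \<sigma> A g)
  note P = inv_parts[OF collect_refm.prems]
  have all: "\<And>x. x \<in> g ` A \<Longrightarrow> gv N t Q \<sigma> x" using P(2) collect_refm.hyps(6) by fast
  have "finite A" "A \<noteq> {}" using quorum_fin collect_refm.hyps by auto
  then have g: "good N t Q \<sigma> (g ` A)" using all unfolding good_def by auto
  show ?case
    apply (rule inv_full[where \<sigma>=\<sigma>])
    apply (simp_all add: subset_insertI2 split: if_splits)
    apply ((elim disjE conjE)?; (hypsubst+)?; ((rule P(1); (assumption | (rule sym, assumption))) | (rule P(2); (assumption | (rule sym, assumption))) | (rule P(3); (assumption | (rule sym, assumption))) | (rule P(4); (assumption | (rule sym, assumption))) | (rule P(5); (assumption | (rule sym, assumption))) | (rule P(6); (assumption | (rule sym, assumption))) | (rule g) | (rule all; (assumption | (rule sym, assumption)))))+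
    done
next
  case (output_sol i \<sigma> T k Rk s)
  note P = inv_parts[OF output_sol.prems]
  have g: "gv N t Q \<sigma> s" using P(5) output_sol.hyps(5,7) by fast
  show ?case
    apply (rule inv_full[where \<sigma>=\<sigma>])
    apply (simp_all add: subset_insertI2 split: if_splits)
    apply ((elim disjE conjE)?; (hypsubst+)?; ((rule P(1); (assumption | (rule sym, assumption))) | (rule P(2); (assumption | (rule sym, assumption))) | (rule P(3); (assumption | (rule sym, assumption))) | (rule P(4); (assumption | (rule sym, assumption))) | (rule P(5); (assumption | (rule sym, assumption))) | (rule P(6); (assumption | (rule sym, assumption))) | (rule g)))+
    done
next
  case (ack i \<sigma> T j)
  note P = inv_parts[OF ack.prems]
  show ?case
    apply (rule inv_full[where \<sigma>=\<sigma>])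
    apply (simp_all add: subset_insertI2)
    apply ((elim disjE conjE)?; (hypsubst+)?; ((rule P(1); (assumption | (rule sym, assumption))) | (rule P(2); (assumption | (rule sym, assumption))) | (rule P(3); (assumption | (rule sym, assumption))) | (rule P(4); (assumption | (rule sym, assumption))) | (rule P(5); (assumption | (rule sym, assumption))) | (rule P(6); (assumption | (rule sym, assumption)))))+
    done
next
  case (collect_ack i \<sigma> A ot rd rs k Rb)
  note P = inv_parts[OF collect_ack.prems]
  have "NewTermAck (aterm \<sigma> i) (ot k) k (rd k) (Some Rb) i \<in> msgs \<sigma>"
    using collect_ack.hyps by metis
  then have g: "good N t Q \<sigma> Rb" using P(4) by fast
  show ?case
    apply (rule inv_full[where \<sigma>=\<sigma>])
    apply (simp_all add: subset_insertI2 split: if_splits)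
    apply ((elim disjE conjE)?; (hypsubst+)?; ((rule P(1); (assumption | (rule sym, assumption))) | (rule P(2); (assumption | (rule sym, assumption))) | (rule P(3); (assumption | (rule sym, assumption))) | (rule P(4); (assumption | (rule sym, assumption))) | (rule P(5); (assumption | (rule sym, assumption))) | (rule P(6); (assumption | (rule sym, assumption))) | (rule g)))+
    done
next
  case (collect_ack_none i \<sigma> A ot rd rs k)
  note P = inv_parts[OF collect_ack_none.prems]
  show ?case
    apply (rule inv_full[where \<sigma>=\<sigma>])
    apply (simp_all add: subset_insertI2 split: if_splits)
    apply ((elim disjE conjE)?; (hypsubst+)?; ((rule P(1); (assumption | (rule sym, assumption))) | (rule P(2); (assumption | (rule sym, assumption))) | (rule P(3); (assumption | (rule sym, assumption))) | (rule P(4); (assumption | (rule sym, assumption))) | (rule P(5); (assumption | (rule sym, assumption))) | (rule P(6); (assumption | (rule sym, assumption)))))+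
    done
qed

theorem lemma2:
  fixes N :: nat and t :: 's and Q :: "'s \<Rightarrow> 's \<Rightarrow> real"
    and R :: "nat \<Rightarrow> 'c \<Rightarrow> 's \<Rightarrow> 'c \<times> 's" and combine :: "'s set \<Rightarrow> 's"
    and crit :: "nat \<Rightarrow> (nat \<Rightarrow> 's set option) \<Rightarrow> nat \<Rightarrow> 's \<Rightarrow> bool"
    and ctx0 :: "nat \<Rightarrow> 'c" and \<sigma> :: "('s, 'c) gstate" and s :: 's
  assumes refinement:
      "\<And>i c S s0. i < N \<Longrightarrow> finite S \<Longrightarrow> s0 \<in> S \<Longrightarrow> Q t s0 \<le> Q t (snd (R i c (combine S)))"
    and reach: "reachable N t R combine crit ctx0 \<sigma>"
    and out: "s \<in> outputs \<sigma>"
  shows "\<exists>s'. majority_optimal N t Q \<sigma> s' \<and> Q t s' \<le> Q t s"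
proof -
  have "(step N t R combine crit)\<^sup>*\<^sup>* (init_state ctx0) \<sigma>" using reach unfolding reachable_def .
  then have "inv N t Q \<sigma>"
  proof (induction rule: rtranclp_induct)
    case base then show ?case by (rule inv_init)
  next
    case (step y z) then show ?case using inv_step[where N=N and t=t and Q=Q and R=R and combine=combine, OF refinement] by fast
  qed
  then show ?thesis using out unfolding inv_def gv_def by fast
qed

end
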